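(* Let $a\geq 3$ be an integer. There is a bijective correspondence between pyramids of size $m\geq 1$ (with bottom piece covering $]0,a[$) and finite sequences $(p_1,p_2,\dots,p_r)$, $r\geq 1$, of pyramids together with integers $s_1,\dots,s_r$ such that $p_i$ is a right $s_i$-pyramid if $i$ is odd and a left $s_i$-pyramid if $i$ is even, $|p_1|+\dots+|p_r|=m$, $s_1=0$, and $$1\leq s_{i+1}-s_i\leq a-1 \text{ if } i \text{ is odd},\qquad 1\leq s_i-s_{i+1}\leq a-1 \text{ if } i \text{ is even}.$$
   Context: A piece is an open interval $]s,s+a[$ of the real line with $s\in\mathbb Z$; two pieces are concurrent iff their intervals intersect. A heap (in the sense of Viennot) is a finite configuration obtained by successively dropping pieces vertically towards the horizontal axis: each dropped piece comes to rest on the axis or on top of the highest previously placed piece whose interval intersects its own; configurations (not dropping orders) are what is counted. A heap is a pyramid if it has a unique bottom (minimal) piece, i.e. exactly one piece rests on the axis. The size $|p|$ is the number of pieces. A pyramid $p$ is a right $s$-pyramid if its bottom piece covers $]s,s+a[$ and is a leftmost piece of $p$ (no piece of $p$ covers $]t,t+a[$ with $t<s$); it is a left $s$-pyramid if its bottom piece covers $]s-a,s[$ and is a rightmost piece of $p$ (no piece of $p$ covers $]t-a,t[$ with $t>s$). *)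

theory Defs
  imports Main
begin

text \<open>A piece is encoded as a pair (s, h): it covers the open interval ]s, s+a[ and
  sits at level h (h = 0 means resting on the axis).\<close>

type_synonym piece = "int \<times> nat"
type_synonym heap = "piece set"

definition concurrent :: "int \<Rightarrow> int \<Rightarrow> int \<Rightarrow> bool" where
  "concurrent a s t \<longleftrightarrow> \<bar>s - t\<bar> < a"

text \<open>Configurations obtainable by dropping pieces: concurrent pieces lie at distinct
  levels, and every piece above the axis rests on a concurrent piece one level below.\<close>

definition is_heap :: "int \<Rightarrow> heap \<Rightarrow> bool" where
  "is_heap a H \<longleftrightarrow> finite H \<and>
     (\<forall>s h t k. (s, h) \<in> H \<and> (t, k) \<in> H \<and> (s, h) \<noteq> (t, k) \<and> concurrent a s t \<longrightarrow> h \<noteq> k) \<and>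
     (\<forall>s h. (s, h) \<in> H \<and> h > 0 \<longrightarrow> (\<exists>t. (t, h - 1) \<in> H \<and> concurrent a s t))"

definition pyramid :: "int \<Rightarrow> heap \<Rightarrow> bool" where
  "pyramid a H \<longleftrightarrow> is_heap a H \<and> (\<exists>!x. x \<in> H \<and> snd x = 0)"

definition right_pyramid :: "int \<Rightarrow> heap \<Rightarrow> int \<Rightarrow> bool" where
  "right_pyramid a p s \<longleftrightarrow> pyramid a p \<and> (s, 0) \<in> p \<and> (\<forall>t h. (t, h) \<in> p \<longrightarrow> s \<le> t)"

definition left_pyramid :: "int \<Rightarrow> heap \<Rightarrow> int \<Rightarrow> bool" where
  "left_pyramid a p s \<longleftrightarrow> pyramid a p \<and> (s - a, 0) \<in> p \<and> (\<forall>t h. (t, h) \<in> p \<longrightarrow> t \<le> s - a)"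

text \<open>Sequences (p_1,s_1),...,(p_r,s_r) of the statement, 0-indexed: index i here is
  index i+1 in the paper, so "i odd" in the paper becomes "even i" here.\<close>
definition pyr_sequences :: "int \<Rightarrow> nat \<Rightarrow> (heap \<times> int) list set" where
  "pyr_sequences a m = {xs. length xs \<ge> 1 \<and>
     (\<forall>i < length xs. if even i then right_pyramid a (fst (xs ! i)) (snd (xs ! i))
                                else left_pyramid a (fst (xs ! i)) (snd (xs ! i))) \<and>
     (\<Sum>x\<leftarrow>xs. card (fst x)) = m \<and>
     snd (xs ! 0) = 0 \<and>
     (\<forall>i. i + 1 < length xs \<longrightarrow>
        (if even i then 1 \<le> snd (xs ! (i+1)) - snd (xs ! i) \<and> snd (xs ! (i+1)) - snd (xs ! i) \<le> a - 1
                   else 1 \<le> snd (xs ! i) - snd (xs ! (i+1)) \<and> snd (xs ! i) - snd (xs ! (i+1)) \<le> a - 1))}"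

definition pyramids_at0 :: "int \<Rightarrow> nat \<Rightarrow> heap set" where
  "pyramids_at0 a m = {p. pyramid a p \<and> (0, 0) \<in> p \<and> card p = m}"

end

theory Submission
  imports Defs "HOL-Library.Equipollence"
begin

lemma Inl_in_Plus [simp]: "Inl x \<in> A <+> B \<longleftrightarrow> x \<in> A" by auto
lemma Inr_in_Plus [simp]: "Inr x \<in> A <+> B \<longleftrightarrow> x \<in> B" by auto

definition chains :: "'x set \<Rightarrow> ('x \<Rightarrow> 'x \<Rightarrow> bool) \<Rightarrow> 'x \<Rightarrow> 'x list set" where
  "chains X R x = {xs. xs \<noteq> [] \<and> set xs \<subseteq> X \<and> successively R xs \<and> last xs = x}"

definition depth :: "'x set \<Rightarrow> ('x \<Rightarrow> 'x \<Rightarrow> bool) \<Rightarrow> 'x \<Rightarrow> nat" where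
  "depth X R x = Max (length ` chains X R x) - 1"

definition acyc :: "'x set \<Rightarrow> ('x \<Rightarrow> 'x \<Rightarrow> bool) \<Rightarrow> bool" where
  "acyc X R \<longleftrightarrow> (\<exists>f::_\<Rightarrow>nat. \<forall>x\<in>X. \<forall>y\<in>X. R x y \<longrightarrow> f x < f y)"

lemma chain_distinct:
  assumes "acyc X R" "set xs \<subseteq> X" "successively R xs"
  shows "distinct xs"
proof -
  obtain f :: "_ \<Rightarrow> nat" where f: "\<forall>x\<in>X. \<forall>y\<in>X. R x y \<longrightarrow> f x < f y"
    using assms(1) unfolding acyc_def by blast
  have "successively (\<lambda>x y. f x < f y) xs"
    using assms(3) by (rule successively_mono) (use f assms(2) in blast)
  then have "successively (<) (map f xs)" by (simp add: successively_map)
  then have "sorted_wrt (<) (map f xs)"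
    by (subst (asm) successively_conv_sorted_wrt) (auto simp: transp_def)
  then have "distinct (map f xs)" by (simp add: strict_sorted_iff)
  then show ?thesis by (simp add: distinct_map)
qed

lemma finite_chains:
  assumes "finite X" "acyc X R"
  shows "finite (chains X R x)"
proof (rule finite_subset)
  show "chains X R x \<subseteq> {xs. set xs \<subseteq> X \<and> length xs \<le> card X}"
  proof
    fix xs assume "xs \<in> chains X R x"
    then have "set xs \<subseteq> X" "successively R xs" by (auto simp: chains_def)
    with chain_distinct[OF assms(2)] have "distinct xs" by blast
    with \<open>set xs \<subseteq> X\<close> assms(1) have "length xs \<le> card X"
      by (metis card_mono distinct_card)
    with \<open>set xs \<subseteq> X\<close> show "xs \<in> {xs. set xs \<subseteq> X \<and> length xs \<le> card X}" by blast
  qed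
  show "finite {xs. set xs \<subseteq> X \<and> length xs \<le> card X}"
    using finite_lists_length_le[OF assms(1)] by simp
qed

lemma single_chain: "x \<in> X \<Longrightarrow> [x] \<in> chains X R x"
  by (simp add: chains_def)

lemma depth_ge:
  assumes "finite X" "acyc X R" "xs \<in> chains X R x"
  shows "length xs - 1 \<le> depth X R x"
proof -
  have "length xs \<le> Max (length ` chains X R x)"
    using finite_chains[OF assms(1,2)] assms(3) by (intro Max_ge) auto
  then show ?thesis unfolding depth_def by simp
qed

lemma depth_obtain:
  assumes "finite X" "acyc X R" "x \<in> X"
  obtains xs where "xs \<in> chains X R x" "length xs = Suc (depth X R x)"
proof -
  have ne: "length ` chains X R x \<noteq> {}" using single_chain[OF assms(3)] by blast
  have "Max (length ` chains X R x) \<in> length ` chains X R x"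
    using finite_chains[OF assms(1,2)] ne by (intro Max_in) auto
  then obtain xs where xs: "xs \<in> chains X R x" "length xs = Max (length ` chains X R x)" by auto
  then have "length xs \<ge> 1" by (cases xs) (auto simp: chains_def)
  with xs have "length xs = Suc (depth X R x)" unfolding depth_def by simp
  with xs that show ?thesis by blast
qed

lemma depth_less:
  assumes "finite X" "acyc X R" "x \<in> X" "y \<in> X" "R y x"
  shows "depth X R y < depth X R x"
proof -
  obtain ys where ys: "ys \<in> chains X R y" "length ys = Suc (depth X R y)"
    using depth_obtain[OF assms(1,2,4)] by blast
  have "ys @ [x] \<in> chains X R x"
    using ys(1) assms(3,5) by (auto simp: chains_def successively_append_iff)
  from depth_ge[OF assms(1,2) this] ys(2) show ?thesis by simp
qed

lemma depth_pred:
  assumes "finite X" "acyc X R" "x \<in> X" "depth X R x > 0"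
  shows "\<exists>y\<in>X. R y x \<and> depth X R y = depth X R x - 1"
proof -
  obtain xs where xs: "xs \<in> chains X R x" "length xs = Suc (depth X R x)"
    using depth_obtain[OF assms(1-3)] by blast
  then have "length xs \<ge> 2" using assms(4) by simp
  then obtain ys where ys: "xs = ys @ [x]" "ys \<noteq> []"
  proof -
    have "xs \<noteq> []" "last xs = x" using xs(1) by (auto simp: chains_def)
    then have "xs = butlast xs @ [x]" by (metis append_butlast_last_id)
    moreover have "butlast xs \<noteq> []" using \<open>length xs \<ge> 2\<close> by (cases xs) auto
    ultimately show ?thesis using that by blast
  qed
  define y where "y = last ys"
  have yc: "ys \<in> chains X R y" and Ryx: "R y x" and yX: "y \<in> X"
    using xs(1) ys unfolding chains_def y_def by (auto simp: successively_append_iff)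
  have "length ys - 1 \<le> depth X R y" by (rule depth_ge[OF assms(1,2) yc])
  moreover have "depth X R y < depth X R x" by (rule depth_less[OF assms(1-3) yX Ryx])
  moreover have "length ys = depth X R x" using xs(2) ys by simp
  ultimately show ?thesis using yX Ryx by (intro bexI[of _ y]) auto
qed

lemma depth_zero_iff:
  assumes "finite X" "acyc X R" "x \<in> X"
  shows "depth X R x = 0 \<longleftrightarrow> \<not> (\<exists>y\<in>X. R y x)"
  using depth_less[OF assms(1,2,3)] depth_pred[OF assms] by fastforce

lemma depth_transport:
  assumes bij: "bij_betw g X Y" and rel: "\<And>x y. x \<in> X \<Longrightarrow> y \<in> X \<Longrightarrow> R' (g x) (g y) \<longleftrightarrow> R x y"
    and x: "x \<in> X"
  shows "depth Y R' (g x) = depth X R x"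
proof -
  have "chains Y R' (g x) = map g ` chains X R x"
  proof
    show "map g ` chains X R x \<subseteq> chains Y R' (g x)"
    proof
      fix ys assume "ys \<in> map g ` chains X R x"
      then obtain xs where xs: "xs \<in> chains X R x" "ys = map g xs" by blast
      then have "set xs \<subseteq> X" "successively R xs" "xs \<noteq> []" "last xs = x" by (auto simp: chains_def)
      moreover have "successively (\<lambda>u v. R' (g u) (g v)) xs"
      proof (rule successively_mono[OF \<open>successively R xs\<close>])
        fix u v assume "u \<in> set xs" "v \<in> set xs" "R u v"
        then show "R' (g u) (g v)" using rel \<open>set xs \<subseteq> X\<close> by auto
      qed
      moreover have "set ys \<subseteq> Y" using xs(2) \<open>set xs \<subseteq> X\<close> bij by (auto simp: bij_betw_def)
      ultimately show "ys \<in> chains Y R' (g x)" using xs(2)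
        by (simp add: chains_def successively_map last_map)
    qed
    show "chains Y R' (g x) \<subseteq> map g ` chains X R x"
    proof
      fix ys assume ys: "ys \<in> chains Y R' (g x)"
      define h where "h = inv_into X g"
      have hg: "\<And>y. y \<in> Y \<Longrightarrow> g (h y) = y" "\<And>y. y \<in> Y \<Longrightarrow> h y \<in> X"
        using bij unfolding h_def by (auto simp: bij_betw_inv_into_right bij_betw_def inv_into_into)
      have hx: "h (g x) = x" using bij x unfolding h_def by (simp add: bij_betw_inv_into_left)
      define xs where "xs = map h ys"
      have sY: "set ys \<subseteq> Y" "ys \<noteq> []" "last ys = g x" "successively R' ys" using ys by (auto simp: chains_def)
      have "map g xs = ys" unfolding xs_def using sY(1) hg(1) by (induction ys) auto
      moreover have "set xs \<subseteq> X" unfolding xs_def using sY(1) hg(2) by auto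
      moreover have "successively R xs"
        unfolding xs_def successively_map
      proof (rule successively_mono[OF sY(4)])
        fix u v assume uv: "u \<in> set ys" "v \<in> set ys" "R' u v"
        then have "u \<in> Y" "v \<in> Y" using sY(1) by auto
        then show "R (h u) (h v)" using rel[of "h u" "h v"] hg uv(3) by simp
      qed
      moreover have "last xs = x" unfolding xs_def using sY(2,3) hx by (simp add: last_map)
      moreover have "xs \<noteq> []" using sY(2) unfolding xs_def by simp
      ultimately have "xs \<in> chains X R x" "ys = map g xs" unfolding chains_def by auto
      then show "ys \<in> map g ` chains X R x" by blast
    qed
  qed
  then have "length ` chains Y R' (g x) = length ` chains X R x" by (simp add: image_image)
  then show ?thesis unfolding depth_def by simp
qed

lemma chain_in_downclosed:
  assumes "\<And>u v. u \<in> Y \<Longrightarrow> v \<in> X \<Longrightarrow> R v u \<Longrightarrow> v \<in> Y"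
  shows "set xs \<subseteq> X \<Longrightarrow> successively R xs \<Longrightarrow> xs \<noteq> [] \<Longrightarrow> last xs \<in> Y \<Longrightarrow> set xs \<subseteq> Y"
proof (induction xs)
  case (Cons x xs)
  show ?case
  proof (cases "xs = []")
    case True then show ?thesis using Cons by simp
  next
    case False
    then have "set xs \<subseteq> Y" using Cons by (auto simp: successively_Cons)
    moreover have "R x (hd xs)" using Cons.prems(2) False by (auto simp: successively_Cons)
    moreover have "hd xs \<in> Y" using \<open>set xs \<subseteq> Y\<close> False by auto
    ultimately show ?thesis using assms Cons.prems(1) by auto
  qed
qed simp

lemma depth_restrict:
  assumes "Y \<subseteq> X" "\<And>u v. u \<in> Y \<Longrightarrow> v \<in> X \<Longrightarrow> R v u \<Longrightarrow> v \<in> Y" "x \<in> Y"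
  shows "depth Y R x = depth X R x"
proof -
  have "chains Y R x = chains X R x"
    using assms chain_in_downclosed[of Y X R] unfolding chains_def by fastforce
  then show ?thesis unfolding depth_def by simp
qed

lemma conc_refl: "a > 0 \<Longrightarrow> concurrent a s s"
  by (simp add: concurrent_def)

lemma conc_sym: "concurrent a s t \<longleftrightarrow> concurrent a t s"
  by (auto simp: concurrent_def)

definition Rel :: "int \<Rightarrow> heap \<Rightarrow> piece \<Rightarrow> piece \<Rightarrow> bool" where
  "Rel a H u v \<longleftrightarrow> u \<in> H \<and> v \<in> H \<and> concurrent a (fst u) (fst v) \<and> snd u < snd v"

lemma acyc_Rel: "acyc H (Rel a H)"
  unfolding acyc_def Rel_def by (rule exI[of _ snd]) auto

lemma chain_snd:
  "successively (Rel a H) xs \<Longrightarrow> xs \<noteq> [] \<Longrightarrow> length xs - 1 + snd (hd xs) \<le> snd (last xs)"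
proof (induction xs)
  case (Cons x xs)
  show ?case
  proof (cases "xs = []")
    case False
    then have "Rel a H x (hd xs)" "successively (Rel a H) xs" using Cons.prems by (auto simp: successively_Cons)
    then show ?thesis using Cons.IH False by (auto simp: Rel_def)
  qed simp
qed simp

lemma heap_chain_exists:
  assumes "is_heap a H"
  shows "\<forall>x\<in>H. snd x = n \<longrightarrow> (\<exists>xs\<in>chains H (Rel a H) x. length xs = Suc n)"
proof (induction n)
  case 0
  show ?case using single_chain[of _ H "Rel a H"] by (metis length_Cons list.size(3))
next
  case (Suc n)
  show ?case
  proof (intro ballI impI)
    fix x assume x: "x \<in> H" "snd x = Suc n"
    have rest: "\<forall>s h. (s, h) \<in> H \<and> h > 0 \<longrightarrow> (\<exists>t. (t, h - 1) \<in> H \<and> concurrent a s t)"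
      using assms by (simp add: is_heap_def)
    have "(fst x, snd x) \<in> H \<and> snd x > 0" using x by (metis prod.collapse zero_less_Suc)
    then obtain t where t: "(t, snd x - 1) \<in> H" "concurrent a (fst x) t"
      using rest by blast
    then have "(t, n) \<in> H" using x(2) by simp
    then obtain xs where xs: "xs \<in> chains H (Rel a H) (t, n)" "length xs = Suc n"
      using Suc.IH by auto
    have "Rel a H (t, n) x" using t x \<open>(t, n) \<in> H\<close> unfolding Rel_def by (simp add: conc_sym)
    then have "xs @ [x] \<in> chains H (Rel a H) x"
      using xs(1) x(1) by (auto simp: chains_def successively_append_iff)
    then show "\<exists>xs\<in>chains H (Rel a H) x. length xs = Suc (Suc n)" using xs(2) by force
  qed
qed

lemma heap_depth:
  assumes "is_heap a H" "x \<in> H"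
  shows "depth H (Rel a H) x = snd x"
proof -
  have fin: "finite H" using assms(1) by (simp add: is_heap_def)
  obtain xs where xs: "xs \<in> chains H (Rel a H) x" "length xs = Suc (depth H (Rel a H) x)"
    using depth_obtain[OF fin acyc_Rel assms(2)] by blast
  have "length xs - 1 + snd (hd xs) \<le> snd (last xs)"
    using xs(1) by (intro chain_snd) (auto simp: chains_def)
  then have le: "depth H (Rel a H) x \<le> snd x" using xs by (simp add: chains_def)
  obtain ys where "ys\<in>chains H (Rel a H) x" "length ys = Suc (snd x)"
    using heap_chain_exists[OF assms(1), of "snd x"] assms(2) by blast
  then have "snd x \<le> depth H (Rel a H) x" using depth_ge[OF fin acyc_Rel] by fastforce
  with le show ?thesis by simp
qed

definition hp :: "'x set \<Rightarrow> ('x \<Rightarrow> int) \<Rightarrow> ('x \<Rightarrow> 'x \<Rightarrow> bool) \<Rightarrow> heap" where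
  "hp X pos R = (\<lambda>x. (pos x, depth X R x)) ` X"


lemma hp_props:
  assumes a: "a > 0" and fin: "finite X" and ac: "acyc X R"
    and Rc: "\<And>x y. x \<in> X \<Longrightarrow> y \<in> X \<Longrightarrow> R x y \<Longrightarrow> concurrent a (pos x) (pos y)"
    and tot: "\<And>x y. x \<in> X \<Longrightarrow> y \<in> X \<Longrightarrow> x \<noteq> y \<Longrightarrow> concurrent a (pos x) (pos y) \<Longrightarrow> R x y \<or> R y x"
  shows "is_heap a (hp X pos R)" "inj_on (\<lambda>x. (pos x, depth X R x)) X"
proof -
  have dneq: "depth X R x \<noteq> depth X R y" if "x \<in> X" "y \<in> X" "x \<noteq> y" "concurrent a (pos x) (pos y)" for x y
  proof
    assume e: "depth X R x = depth X R y"
    from tot[OF that] show False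
    proof
      assume "R x y" then show False using depth_less[OF fin ac that(2,1)] e by simp
    next
      assume "R y x" then show False using depth_less[OF fin ac that(1,2)] e by simp
    qed
  qed
  show "inj_on (\<lambda>x. (pos x, depth X R x)) X"
  proof (rule inj_onI)
    fix x y assume "x \<in> X" "y \<in> X" "(pos x, depth X R x) = (pos y, depth X R y)"
    then show "x = y" using dneq[of x y] conc_refl[OF a, of "pos x"] by auto
  qed
  show "is_heap a (hp X pos R)"
    unfolding is_heap_def hp_def
  proof (intro conjI allI impI)
    show "finite ((\<lambda>x. (pos x, depth X R x)) ` X)" using fin by simp
  next
    fix s h t k
    assume "(s, h) \<in> (\<lambda>x. (pos x, depth X R x)) ` X \<and> (t, k) \<in> (\<lambda>x. (pos x, depth X R x)) ` X \<and>
       (s, h) \<noteq> (t, k) \<and> concurrent a s t"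
    then obtain x y where xy: "x \<in> X" "y \<in> X" "(s, h) = (pos x, depth X R x)" "(t, k) = (pos y, depth X R y)"
      "(s, h) \<noteq> (t, k)" "concurrent a s t" by blast
    then have "x \<noteq> y" by auto
    then show "h \<noteq> k" using dneq[of x y] xy by auto
  next
    fix s h
    assume "(s, h) \<in> (\<lambda>x. (pos x, depth X R x)) ` X \<and> 0 < h"
    then obtain x where x: "x \<in> X" "s = pos x" "h = depth X R x" "h > 0" by (auto simp: image_iff)
    then obtain y where "y \<in> X" "R y x" "depth X R y = h - 1"
      using depth_pred[OF fin ac x(1)] by auto
    then show "\<exists>t. (t, h - 1) \<in> (\<lambda>x. (pos x, depth X R x)) ` X \<and> concurrent a s t"
    proof -
      have "concurrent a (pos y) (pos x)" using Rc[of y x] \<open>y \<in> X\<close> \<open>R y x\<close> x(1) by blast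
      then have "concurrent a s (pos y)" using x(2) by (simp add: conc_sym)
      moreover have "(pos y, h - 1) \<in> (\<lambda>x. (pos x, depth X R x)) ` X"
        by (rule image_eqI[where x=y]) (simp_all add: \<open>y \<in> X\<close> \<open>depth X R y = h - 1\<close>)
      ultimately show ?thesis by blast
    qed
  qed
qed


lemma heap_has_bottom:
  assumes "is_heap a H"
  shows "\<forall>x\<in>H. snd x = n \<longrightarrow> (\<exists>y\<in>H. snd y = 0)"
proof (induction n)
  case 0 then show ?case by blast
next
  case (Suc n)
  have rest: "\<forall>s h. (s, h) \<in> H \<and> h > 0 \<longrightarrow> (\<exists>t. (t, h - 1) \<in> H \<and> concurrent a s t)"
    using assms by (simp add: is_heap_def)
  show ?case
  proof (intro ballI impI)
    fix x assume x: "x \<in> H" "snd x = Suc n"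
    have "(fst x, snd x) \<in> H \<and> snd x > 0" using x by (metis prod.collapse zero_less_Suc)
    then obtain t where "(t, snd x - 1) \<in> H" using rest by blast
    then have "(t, n) \<in> H" using x(2) by simp
    then show "\<exists>y\<in>H. snd y = 0" using Suc.IH by fastforce
  qed
qed

lemma heap_nonempty_bottom:
  assumes "is_heap a H" "H \<noteq> {}"
  shows "\<exists>y\<in>H. snd y = 0"
  using heap_has_bottom[OF assms(1)] assms(2) by blast

lemma pyr_bot_unique:
  assumes "pyramid a P" "(c, 0) \<in> P" "x \<in> P" "snd x = 0"
  shows "x = (c, 0)"
  using assms unfolding pyramid_def by (metis snd_conv)

lemma pyr_reach:
  assumes "pyramid a P" "(c, 0) \<in> P"
  shows "\<forall>x\<in>P. snd x = n \<longrightarrow> (Rel a P)\<^sup>*\<^sup>* (c, 0) x"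
proof (induction n)
  case 0
  then show ?case using pyr_bot_unique[OF assms] by blast
next
  case (Suc n)
  have rest: "\<forall>s h. (s, h) \<in> P \<and> h > 0 \<longrightarrow> (\<exists>t. (t, h - 1) \<in> P \<and> concurrent a s t)"
    using assms by (simp add: is_heap_def pyramid_def)
  show ?case
  proof (intro ballI impI)
    fix x assume x: "x \<in> P" "snd x = Suc n"
    have "(fst x, snd x) \<in> P \<and> snd x > 0" using x by (metis prod.collapse zero_less_Suc)
    then obtain t where t: "(t, snd x - 1) \<in> P" "concurrent a (fst x) t" using rest by blast
    then have tn: "(t, n) \<in> P" using x(2) by simp
    then have "(Rel a P)\<^sup>*\<^sup>* (c, 0) (t, n)" using Suc.IH by fastforce
    moreover have "Rel a P (t, n) x" using t tn x unfolding Rel_def by (simp add: conc_sym)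
    ultimately show "(Rel a P)\<^sup>*\<^sup>* (c, 0) x" by (rule rtranclp.rtrancl_into_rtrancl)
  qed
qed

lemma pyr_reach': "pyramid a P \<Longrightarrow> (c, 0) \<in> P \<Longrightarrow> x \<in> P \<Longrightarrow> (Rel a P)\<^sup>*\<^sup>* (c, 0) x"
  using pyr_reach by blast

lemma pyr_card: "pyramid a P \<Longrightarrow> card P \<ge> 1"
  unfolding pyramid_def is_heap_def
  by (metis One_nat_def Suc_leI card_gt_0_iff empty_iff)

lemma heap_tot:
  assumes "is_heap a H" "x \<in> H" "y \<in> H" "x \<noteq> y" "concurrent a (fst x) (fst y)"
  shows "Rel a H x y \<or> Rel a H y x"
proof -
  have "snd x \<noteq> snd y"
    using assms unfolding is_heap_def by (metis prod.collapse)
  then show ?thesis using assms(2,3,5) unfolding Rel_def by (auto simp: conc_sym)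
qed


definition upQ :: "int \<Rightarrow> int \<Rightarrow> heap \<Rightarrow> heap" where
  "upQ a c P = {y \<in> P. \<exists>x\<in>P. fst x < c \<and> (Rel a P)\<^sup>*\<^sup>* x y}"

lemma Rel_sub: "Rel a H u v \<Longrightarrow> u \<in> H \<and> v \<in> H"
  by (simp add: Rel_def)

lemma Rel_mono: "Rel a H u v \<Longrightarrow> H \<subseteq> H' \<Longrightarrow> Rel a H' u v"
  by (auto simp: Rel_def)

lemma Rel_restrict: "Q \<subseteq> H \<Longrightarrow> u \<in> Q \<Longrightarrow> v \<in> Q \<Longrightarrow> Rel a Q u v \<longleftrightarrow> Rel a H u v"
  by (auto simp: Rel_def)

context
  fixes a :: int and c :: int and P :: heap
  assumes a: "a > 0" and pyr: "pyramid a P" and botp: "(c, 0) \<in> P"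
begin

lemma heapP: "is_heap a P" using pyr by (simp add: pyramid_def)
lemma finP: "finite P" using heapP by (simp add: is_heap_def)

abbreviation "Q \<equiv> upQ a c P"

lemma Q_sub: "Q \<subseteq> P" by (auto simp: upQ_def)

lemma Q_up: "y \<in> Q \<Longrightarrow> Rel a P y z \<Longrightarrow> z \<in> Q"
  unfolding upQ_def using Rel_sub
  by (smt (verit, best) mem_Collect_eq rtranclp.rtrancl_into_rtrancl)

lemma A_down: "y \<in> P - Q \<Longrightarrow> Rel a P z y \<Longrightarrow> z \<in> P - Q"
  using Q_up Rel_sub by blast

lemma N_Q: "x \<in> P \<Longrightarrow> fst x < c \<Longrightarrow> x \<in> Q"
  unfolding upQ_def by blast

lemma Q_empty_iff: "Q = {} \<longleftrightarrow> (\<forall>x\<in>P. c \<le> fst x)"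
proof
  assume "Q = {}" then show "\<forall>x\<in>P. c \<le> fst x" using N_Q by fastforce
next
  assume "\<forall>x\<in>P. c \<le> fst x" then show "Q = {}" unfolding upQ_def by fastforce
qed

lemma bot_notQ: "(c, 0) \<notin> Q"
proof
  assume "(c, 0) \<in> Q"
  then obtain x where x: "x \<in> P" "fst x < c" "(Rel a P)\<^sup>*\<^sup>* x (c, 0)" unfolding upQ_def by blast
  from x(3) show False
  proof (cases rule: rtranclp.cases)
    case rtrancl_refl then show False using x(2) by force
  next
    case (rtrancl_into_rtrancl z) then show False by (simp add: Rel_def)
  qed
qed

lemma A_heap: "is_heap a (P - Q)"
  unfolding is_heap_def
proof (intro conjI allI impI)
  show "finite (P - Q)" using finP by simp
next
  fix s h t k
  assume "(s, h) \<in> P - Q \<and> (t, k) \<in> P - Q \<and> (s, h) \<noteq> (t, k) \<and> concurrent a s t"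
  then show "h \<noteq> k" using heapP unfolding is_heap_def by blast
next
  fix s h assume sh: "(s, h) \<in> P - Q \<and> 0 < h"
  have rest: "\<forall>s h. (s, h) \<in> P \<and> h > 0 \<longrightarrow> (\<exists>t. (t, h - 1) \<in> P \<and> concurrent a s t)"
    using heapP by (simp add: is_heap_def)
  then obtain t where t: "(t, h - 1) \<in> P" "concurrent a s t" using sh by blast
  have "Rel a P (t, h - 1) (s, h)" using t sh unfolding Rel_def by (simp add: conc_sym)
  then have "(t, h - 1) \<in> P - Q" using A_down sh by blast
  then show "\<exists>t. (t, h - 1) \<in> P - Q \<and> concurrent a s t" using t by blast
qed

lemma A_right: "right_pyramid a (P - Q) c"
  unfolding right_pyramid_def pyramid_def
proof (intro conjI allI impI)
  show "is_heap a (P - Q)" by (rule A_heap)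
  show cA: "(c, 0) \<in> P - Q" using botp bot_notQ by blast
  show "\<exists>!x. x \<in> P - Q \<and> snd x = 0"
    using cA pyr_bot_unique[OF pyr botp] by (intro ex1I[of _ "(c, 0)"]) auto
  fix t h assume "(t, h) \<in> P - Q"
  then show "c \<le> t" using N_Q by force
qed

lemma Q_tot: "x \<in> Q \<Longrightarrow> y \<in> Q \<Longrightarrow> x \<noteq> y \<Longrightarrow> concurrent a (fst x) (fst y) \<Longrightarrow> Rel a Q x y \<or> Rel a Q y x"
  using heap_tot[OF heapP] Q_sub Rel_restrict[OF Q_sub] by blast

lemma finQ: "finite Q" using finP Q_sub finite_subset by blast

lemma Q_hp: "is_heap a (hp Q fst (Rel a Q))" "inj_on (\<lambda>x. (fst x, depth Q (Rel a Q) x)) Q"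
  using hp_props[OF a finQ acyc_Rel, where pos=fst] Q_tot by (auto simp: Rel_def)

lemma minQ_loc:
  assumes q: "q \<in> Q" and nopred: "\<not> (\<exists>z\<in>Q. Rel a Q z q)"
  shows "c - a < fst q \<and> fst q < c"
proof -
  obtain x where x: "x \<in> P" "fst x < c" "(Rel a P)\<^sup>*\<^sup>* x q" using q unfolding upQ_def by blast
  have fq: "fst q < c"
    using x(3)
  proof (cases rule: rtranclp.cases)
    case rtrancl_refl then show ?thesis using x(2) by force
  next
    case (rtrancl_into_rtrancl z)
    then have "z \<in> Q" unfolding upQ_def using x(1,2) Rel_sub by blast
    then have "Rel a Q z q" using rtrancl_into_rtrancl(2) Rel_restrict[OF Q_sub] q by blast
    then show ?thesis using nopred \<open>z \<in> Q\<close> by blast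
  qed
  have qP: "q \<in> P" using q Q_sub by blast
  have "q \<noteq> (c, 0)" using fq by auto
  then have "snd q \<noteq> 0" using pyr_bot_unique[OF pyr botp qP] by blast
  have rest: "\<forall>s h. (s, h) \<in> P \<and> h > 0 \<longrightarrow> (\<exists>t. (t, h - 1) \<in> P \<and> concurrent a s t)"
    using heapP by (simp add: is_heap_def)
  have "(fst q, snd q) \<in> P \<and> snd q > 0" using qP \<open>snd q \<noteq> 0\<close> by simp
  then obtain t where t: "(t, snd q - 1) \<in> P" "concurrent a (fst q) t" using rest by blast
  have "Rel a P (t, snd q - 1) q" using t qP \<open>snd q \<noteq> 0\<close> unfolding Rel_def by (simp add: conc_sym)
  then have "(t, snd q - 1) \<notin> Q" using nopred Rel_restrict[OF Q_sub] q by blast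
  then have "c \<le> t" using N_Q t(1) by force
  then show ?thesis using fq t(2) by (simp add: concurrent_def)
qed

definition hq :: "piece \<Rightarrow> piece" where "hq q = (fst q, depth Q (Rel a Q) q)"

lemma hq_hp: "hp Q fst (Rel a Q) = hq ` Q" by (simp add: hp_def hq_def[abs_def])

lemma B_pyr:
  assumes ne: "Q \<noteq> {}"
  shows "\<exists>b. c - a < b \<and> b < c \<and> (b, 0) \<in> hp Q fst (Rel a Q) \<and> pyramid a (hp Q fst (Rel a Q))"
proof -
  define B where "B = hp Q fst (Rel a Q)"
  have hB: "is_heap a B" using Q_hp B_def by simp
  have "B \<noteq> {}" using ne B_def by (simp add: hp_def)
  then obtain y where y: "y \<in> B" "snd y = 0" using heap_nonempty_bottom[OF hB] by blast
  then obtain q where q: "q \<in> Q" "y = hq q" using B_def hq_hp by auto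
  have d0: "depth Q (Rel a Q) q = 0" using y q by (simp add: hq_def)
  have np: "\<And>q. q \<in> Q \<Longrightarrow> depth Q (Rel a Q) q = 0 \<Longrightarrow> \<not> (\<exists>z\<in>Q. Rel a Q z q)"
    using depth_zero_iff[OF finQ acyc_Rel] by blast
  have loc: "\<And>q. q \<in> Q \<Longrightarrow> depth Q (Rel a Q) q = 0 \<Longrightarrow> c - a < fst q \<and> fst q < c"
    using minQ_loc np by blast
  have uniq: "q' = q" if "q' \<in> Q" "depth Q (Rel a Q) q' = 0" for q'
  proof (rule ccontr)
    assume "q' \<noteq> q"
    moreover have "concurrent a (fst q') (fst q)"
      using loc[OF that] loc[OF q(1) d0] by (auto simp: concurrent_def abs_less_iff)
    ultimately have "Rel a Q q' q \<or> Rel a Q q q'" using Q_tot that(1) q(1) by blast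
    then show False using np[OF q(1) d0] np[OF that] that(1) q(1) by blast
  qed
  have "\<exists>!x. x \<in> B \<and> snd x = 0"
  proof (rule ex1I[of _ y])
    show "y \<in> B \<and> snd y = 0" using y by simp
    fix x assume "x \<in> B \<and> snd x = 0"
    then obtain q' where "q' \<in> Q" "x = hq q'" "depth Q (Rel a Q) q' = 0"
      using B_def hq_hp by (auto simp: hq_def)
    then show "x = y" using uniq q by simp
  qed
  then have "pyramid a B" using hB by (simp add: pyramid_def)
  moreover have "(fst q, 0) \<in> B" using y q by (simp add: hq_def)
  ultimately show ?thesis using loc[OF q(1) d0] B_def by blast
qed

lemma card_B: "card (hp Q fst (Rel a Q)) = card Q"
  using Q_hp(2) by (simp add: hp_def card_image)

end


fun RX :: "int \<Rightarrow> heap \<Rightarrow> heap \<Rightarrow> piece + piece \<Rightarrow> piece + piece \<Rightarrow> bool" where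
  "RX a A B (Inl x) (Inl y) = Rel a A x y"
| "RX a A B (Inr x) (Inr y) = Rel a B x y"
| "RX a A B (Inl x) (Inr y) = (x \<in> A \<and> y \<in> B \<and> concurrent a (fst x) (fst y))"
| "RX a A B (Inr x) (Inl y) = False"

abbreviation posX :: "piece + piece \<Rightarrow> int" where "posX \<equiv> case_sum fst fst"

definition prodh :: "int \<Rightarrow> heap \<Rightarrow> heap \<Rightarrow> heap" where
  "prodh a A B = hp (A <+> B) posX (RX a A B)"

definition tot_rel :: "int \<Rightarrow> heap \<Rightarrow> bool" where
  "tot_rel a H \<longleftrightarrow> (\<forall>x\<in>H. \<forall>y\<in>H. x \<noteq> y \<and> concurrent a (fst x) (fst y) \<longrightarrow> Rel a H x y \<or> Rel a H y x)"

lemma heap_tot_rel: "is_heap a H \<Longrightarrow> tot_rel a H"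
  using heap_tot unfolding tot_rel_def by blast

lemma acyc_RX:
  assumes "finite A"
  shows "acyc (A <+> B) (RX a A B)"
proof -
  define K where "K = Suc (Max (snd ` A))"
  define f :: "piece + piece \<Rightarrow> nat" where "f = case_sum (\<lambda>x. snd x) (\<lambda>y. snd y + K)"
  have "\<forall>u\<in>A <+> B. \<forall>v\<in>A <+> B. RX a A B u v \<longrightarrow> f u < f v"
  proof (intro ballI impI)
    fix u v assume uv: "u \<in> A <+> B" "v \<in> A <+> B" "RX a A B u v"
    show "f u < f v"
    proof (cases u; cases v)
      fix x y assume "u = Inl x" "v = Inr y"
      then have "x \<in> A" using uv by auto
      then have "snd x \<le> Max (snd ` A)" using assms by (intro Max_ge) auto
      then show ?thesis using \<open>u = Inl x\<close> \<open>v = Inr y\<close> by (simp add: f_def K_def)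
    qed (use uv in \<open>auto simp: f_def Rel_def\<close>)
  qed
  then show ?thesis unfolding acyc_def by blast
qed

lemma RX_conc: "u \<in> A <+> B \<Longrightarrow> v \<in> A <+> B \<Longrightarrow> RX a A B u v \<Longrightarrow> concurrent a (posX u) (posX v)"
  by (cases u; cases v) (auto simp: Rel_def)

lemma RX_tot:
  assumes "tot_rel a A" "tot_rel a B"
  shows "u \<in> A <+> B \<Longrightarrow> v \<in> A <+> B \<Longrightarrow> u \<noteq> v \<Longrightarrow> concurrent a (posX u) (posX v) \<Longrightarrow> RX a A B u v \<or> RX a A B v u"
  using assms unfolding tot_rel_def by (cases u; cases v) (auto simp: conc_sym)

lemma prodh_props:
  assumes "a > 0" "finite A" "finite B" "tot_rel a A" "tot_rel a B"
  shows "is_heap a (prodh a A B)" "inj_on (\<lambda>x. (posX x, depth (A <+> B) (RX a A B) x)) (A <+> B)"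
  using hp_props[OF assms(1) _ acyc_RX[OF assms(2)], where pos = posX] assms(3) assms(2)
    RX_conc RX_tot[OF assms(4,5)] unfolding prodh_def by auto

lemma RX_Inl_depth:
  assumes "is_heap a A" "finite B" "x \<in> A"
  shows "depth (A <+> B) (RX a A B) (Inl x) = snd x"
proof -
  have finA: "finite A" using assms(1) by (simp add: is_heap_def)
  have "depth (Inl ` A) (RX a A B) (Inl x) = depth (A <+> B) (RX a A B) (Inl x)"
  proof (rule depth_restrict)
    show "Inl ` A \<subseteq> A <+> B" by auto
    show "Inl x \<in> Inl ` A" using assms(3) by simp
    fix u v assume "u \<in> Inl ` A" "v \<in> A <+> B" "RX a A B v u"
    then show "v \<in> Inl ` A" by (cases v) auto
  qed
  moreover have "depth (Inl ` A) (RX a A B) (Inl x) = depth A (Rel a A) x"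
    by (rule depth_transport) (auto simp: bij_betw_def assms(3))
  ultimately show ?thesis using heap_depth[OF assms(1,3)] by simp
qed


lemma prod_decomp:
  assumes a: "a > 0" and pyr: "pyramid a P" and botp: "(c, 0) \<in> P"
  shows "prodh a (P - upQ a c P) (hp (upQ a c P) fst (Rel a (upQ a c P))) = P"
proof -
  define Q where "Q = upQ a c P"
  define A where "A = P - Q"
  define hq where "hq = (\<lambda>q. (fst q, depth Q (Rel a Q) q))"
  define B where "B = hp Q fst (Rel a Q)"
  have B_eq: "B = hq ` Q" by (simp add: B_def hp_def hq_def)
  have heapP: "is_heap a P" using pyr by (simp add: pyramid_def)
  have finP: "finite P" using heapP by (simp add: is_heap_def)
  have QP: "Q \<subseteq> P" using Q_sub[OF a pyr botp] Q_def by simp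
  have finQ: "finite Q" using finP QP finite_subset by blast
  have finA: "finite A" using finP A_def by simp
  have Qup: "\<And>y z. y \<in> Q \<Longrightarrow> Rel a P y z \<Longrightarrow> z \<in> Q" using Q_up[OF a pyr botp] Q_def by blast
  have Qtot: "\<And>x y. x \<in> Q \<Longrightarrow> y \<in> Q \<Longrightarrow> x \<noteq> y \<Longrightarrow> concurrent a (fst x) (fst y) \<Longrightarrow> Rel a Q x y \<or> Rel a Q y x"
    using Q_tot[OF a pyr botp] Q_def by blast
  have inj_hq: "inj_on hq Q" using Q_hp(2)[OF a pyr botp] Q_def hq_def by simp
  define Y where "Y = A <+> Q"
  define X where "X = A <+> B"
  define h :: "piece + piece \<Rightarrow> piece" where "h = case_sum id id"
  have bij_h: "bij_betw h Y P"
    unfolding bij_betw_def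
  proof
    show "inj_on h Y" unfolding inj_on_def Y_def h_def A_def by auto
    show "h ` Y = P"
    proof
      show "h ` Y \<subseteq> P" using QP by (auto simp: Y_def h_def A_def)
      show "P \<subseteq> h ` Y"
      proof
        fix x assume "x \<in> P"
        show "x \<in> h ` Y"
        proof (cases "x \<in> Q")
          case True then show ?thesis by (intro rev_image_eqI[of "Inr x"]) (auto simp: Y_def h_def)
        next
          case False then show ?thesis using \<open>x \<in> P\<close> by (intro rev_image_eqI[of "Inl x"]) (auto simp: Y_def h_def A_def)
        qed
      qed
    qed
  qed
  have relY: "Rel a P (h u) (h v) \<longleftrightarrow> RX a A Q u v" if "u \<in> Y" "v \<in> Y" for u v
  proof (cases u; cases v)
    fix x y assume uv: "u = Inl x" "v = Inl y"
    then show ?thesis using that by (auto simp: h_def Y_def A_def Rel_def)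
  next
    fix x y assume uv: "u = Inr x" "v = Inr y"
    then show ?thesis using that Rel_restrict[OF QP] by (auto simp: h_def Y_def)
  next
    fix x y assume uv: "u = Inl x" "v = Inr y"
    then have xA: "x \<in> A" "y \<in> Q" using that by (auto simp: Y_def)
    then have "x \<in> P" "y \<in> P" "x \<noteq> y" using QP by (auto simp: A_def)
    show ?thesis
    proof
      assume "Rel a P (h u) (h v)" then show "RX a A Q u v" using uv xA by (simp add: h_def Rel_def)
    next
      assume "RX a A Q u v"
      then have "concurrent a (fst x) (fst y)" using uv by simp
      then have "Rel a P x y \<or> Rel a P y x" using heap_tot[OF heapP \<open>x \<in> P\<close> \<open>y \<in> P\<close> \<open>x \<noteq> y\<close>] by simp
      moreover have "\<not> Rel a P y x" using Qup[of y x] xA by (auto simp: A_def)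
      ultimately show "Rel a P (h u) (h v)" using uv by (simp add: h_def)
    qed
  next
    fix x y assume uv: "u = Inr x" "v = Inl y"
    then have "y \<in> A" "x \<in> Q" using that by (auto simp: Y_def)
    then have "\<not> Rel a P x y" using Qup[of x y] by (auto simp: A_def)
    then show ?thesis using uv by (simp add: h_def)
  qed
  have dY: "depth Y (RX a A Q) u = snd (h u)" if "u \<in> Y" for u
  proof -
    have "depth P (Rel a P) (h u) = depth Y (RX a A Q) u"
      by (rule depth_transport[where R'="Rel a P" and R="RX a A Q", OF bij_h relY that])
    moreover have "h u \<in> P" using bij_h that by (auto simp: bij_betw_def)
    ultimately show ?thesis using heap_depth[OF heapP] by simp
  qed
  define g :: "piece + piece \<Rightarrow> piece + piece" where "g = map_sum id hq"
  have bij_g: "bij_betw g Y X"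
    unfolding bij_betw_def
  proof
    show "inj_on g Y"
      unfolding inj_on_def Y_def g_def
    proof (intro ballI impI)
      fix u v assume "u \<in> A <+> Q" "v \<in> A <+> Q" "map_sum id hq u = map_sum id hq v"
      then show "u = v" using inj_hq by (cases u; cases v) (auto simp: inj_on_def)
    qed
    show "g ` Y = X"
    proof
      show "g ` Y \<subseteq> X" by (auto simp: g_def X_def Y_def B_eq)
      show "X \<subseteq> g ` Y"
      proof
        fix w assume "w \<in> X"
        then consider x where "w = Inl x" "x \<in> A" | q where "w = Inr (hq q)" "q \<in> Q"
          unfolding X_def B_eq by auto
        then show "w \<in> g ` Y"
        proof cases
          case 1 then show ?thesis by (intro rev_image_eqI[of "Inl x"]) (auto simp: Y_def g_def)
        next
          case 2 then show ?thesis by (intro rev_image_eqI[of "Inr q"]) (auto simp: Y_def g_def)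
        qed
      qed
    qed
  qed
  have depth_less_Q: "\<And>x y. x \<in> Q \<Longrightarrow> y \<in> Q \<Longrightarrow> Rel a Q y x \<Longrightarrow> depth Q (Rel a Q) y < depth Q (Rel a Q) x"
    using depth_less[OF finQ acyc_Rel] by blast
  have relB: "Rel a B (hq x) (hq y) \<longleftrightarrow> Rel a Q x y" if "x \<in> Q" "y \<in> Q" for x y
  proof
    assume r: "Rel a B (hq x) (hq y)"
    then have c: "concurrent a (fst x) (fst y)" and d: "depth Q (Rel a Q) x < depth Q (Rel a Q) y"
      by (auto simp: Rel_def hq_def)
    then have "x \<noteq> y" by auto
    then have "Rel a Q x y \<or> Rel a Q y x" using Qtot that c by blast
    then show "Rel a Q x y" using depth_less_Q[OF that(1,2)] d by auto
  next
    assume r: "Rel a Q x y"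
    then have "depth Q (Rel a Q) x < depth Q (Rel a Q) y" using depth_less_Q that by blast
    then show "Rel a B (hq x) (hq y)" using r that by (auto simp: Rel_def hq_def B_eq)
  qed
  have relX: "RX a A B (g u) (g v) \<longleftrightarrow> RX a A Q u v" if "u \<in> Y" "v \<in> Y" for u v
  proof (cases u; cases v)
    fix x y assume "u = Inr x" "v = Inr y"
    then show ?thesis using relB that by (auto simp: g_def Y_def)
  next
    fix x y assume "u = Inl x" "v = Inr y"
    then show ?thesis using that by (auto simp: g_def Y_def hq_def B_eq)
  qed (auto simp: g_def)
  have dX: "depth X (RX a A B) (g u) = snd (h u)" if "u \<in> Y" for u
  proof -
    have "depth X (RX a A B) (g u) = depth Y (RX a A Q) u"
      by (rule depth_transport[where R'="RX a A B" and R="RX a A Q", OF bij_g relX that])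
    then show ?thesis using dY[OF that] by simp
  qed
  have XgY: "X = g ` Y" using bij_g by (simp add: bij_betw_def)
  have "prodh a A B = (\<lambda>w. (posX w, depth X (RX a A B) w)) ` X"
    by (simp add: prodh_def hp_def X_def)
  also have "\<dots> = (\<lambda>u. (posX (g u), depth X (RX a A B) (g u))) ` Y"
    by (simp add: XgY image_image)
  also have "\<dots> = (\<lambda>u. (fst (h u), snd (h u))) ` Y"
  proof (rule image_cong[OF refl])
    fix u assume "u \<in> Y"
    moreover have "posX (g u) = fst (h u)" by (cases u) (auto simp: g_def h_def hq_def)
    ultimately show "(posX (g u), depth X (RX a A B) (g u)) = (fst (h u), snd (h u))" using dX by simp
  qed
  also have "\<dots> = h ` Y" by simp
  also have "\<dots> = P" using bij_h by (simp add: bij_betw_def)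
  finally show ?thesis unfolding A_def B_def Q_def .
qed


lemma rtranclp_map:
  assumes "\<And>u v. R u v \<Longrightarrow> S (f u) (f v)" "R\<^sup>*\<^sup>* x y"
  shows "S\<^sup>*\<^sup>* (f x) (f y)"
  using assms(2) by induction (auto intro: rtranclp.rtrancl_into_rtrancl assms(1))

lemma prod_props:
  assumes a: "a > 0" and rA: "right_pyramid a A c" and pB: "pyramid a B" and bB: "(b, 0) \<in> B"
    and bl: "c - a < b" and bu: "b < c"
  shows "pyramid a (prodh a A B)" "(c, 0) \<in> prodh a A B" "card (prodh a A B) = card A + card B"
    "upQ a c (prodh a A B) \<noteq> {}" "prodh a A B - upQ a c (prodh a A B) = A"
    "hp (upQ a c (prodh a A B)) fst (Rel a (upQ a c (prodh a A B))) = B"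
proof -
  have pA: "pyramid a A" and cA: "(c, 0) \<in> A" and Ar: "\<And>t h. (t, h) \<in> A \<Longrightarrow> c \<le> t"
    using rA by (auto simp: right_pyramid_def)
  have hA: "is_heap a A" using pA by (simp add: pyramid_def)
  have hB: "is_heap a B" using pB by (simp add: pyramid_def)
  have finA: "finite A" using hA by (simp add: is_heap_def)
  have finB: "finite B" using hB by (simp add: is_heap_def)
  define X where "X = A <+> B"
  define R where "R = RX a A B"
  define e where "e = (\<lambda>w. (posX w, depth X R w))"
  define P where "P = prodh a A B"
  have P_eq: "P = e ` X" by (simp add: P_def prodh_def hp_def e_def X_def R_def)
  have hP: "is_heap a P" and inj_e: "inj_on e X"
    using prodh_props[OF a finA finB heap_tot_rel[OF hA] heap_tot_rel[OF hB]]
    by (auto simp: P_def e_def X_def R_def)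
  have finX: "finite X" using finA finB by (simp add: X_def)
  have acX: "acyc X R" using acyc_RX[OF finA] by (simp add: X_def R_def)
  have eInl: "e (Inl x) = x" if "x \<in> A" for x
    using RX_Inl_depth[OF hA finB that] by (simp add: e_def X_def R_def)
  have relP: "Rel a P (e u) (e v) \<longleftrightarrow> R u v" if "u \<in> X" "v \<in> X" for u v
  proof
    assume r: "Rel a P (e u) (e v)"
    then have c: "concurrent a (posX u) (posX v)" and d: "depth X R u < depth X R v"
      by (auto simp: Rel_def e_def)
    then have "u \<noteq> v" by auto
    then have "R u v \<or> R v u"
      using RX_tot[OF heap_tot_rel[OF hA] heap_tot_rel[OF hB]] that c by (auto simp: X_def R_def)
    then show "R u v" using depth_less[OF finX acX that(1,2)] d by auto
  next
    assume r: "R u v"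
    then have "depth X R u < depth X R v" using depth_less[OF finX acX that(2,1)] by blast
    moreover have "concurrent a (posX u) (posX v)" using RX_conc r that by (auto simp: X_def R_def)
    ultimately show "Rel a P (e u) (e v)" using that by (auto simp: Rel_def e_def P_eq)
  qed
  have cP: "(c, 0) \<in> P" using eInl[OF cA] cA by (auto simp: P_eq X_def intro: rev_image_eqI[of "Inl (c, 0)"])
  have restA: "\<forall>s h. (s, h) \<in> A \<and> h > 0 \<longrightarrow> (\<exists>t. (t, h - 1) \<in> A \<and> concurrent a s t)"
    using hA by (simp add: is_heap_def)
  have restB: "\<forall>s h. (s, h) \<in> B \<and> h > 0 \<longrightarrow> (\<exists>t. (t, h - 1) \<in> B \<and> concurrent a s t)"
    using hB by (simp add: is_heap_def)
  have haspred: "\<exists>w'\<in>X. R w' w" if "w \<in> X" "e w \<noteq> (c, 0)" for w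
  proof (cases w)
    case (Inl x)
    then have xA: "x \<in> A" using that by (auto simp: X_def)
    then have "x \<noteq> (c, 0)" using that Inl eInl by auto
    then have "snd x \<noteq> 0" using pyr_bot_unique[OF pA cA xA] by blast
    then have "(fst x, snd x) \<in> A \<and> snd x > 0" using xA by simp
    then obtain t where t: "(t, snd x - 1) \<in> A" "concurrent a (fst x) t" using restA by blast
    then have "Rel a A (t, snd x - 1) x" using xA \<open>snd x \<noteq> 0\<close> by (auto simp: Rel_def conc_sym)
    then show ?thesis using t Inl by (intro bexI[of _ "Inl (t, snd x - 1)"]) (auto simp: R_def X_def)
  next
    case (Inr y)
    then have yB: "y \<in> B" using that by (auto simp: X_def)
    show ?thesis
    proof (cases "snd y = 0")
      case True
      then have "y = (b, 0)" using pyr_bot_unique[OF pB bB yB] by blast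
      moreover have "concurrent a c b" using bl bu by (simp add: concurrent_def)
      ultimately show ?thesis using Inr cA yB by (intro bexI[of _ "Inl (c, 0)"]) (auto simp: R_def X_def)
    next
      case False
      then have "(fst y, snd y) \<in> B \<and> snd y > 0" using yB by simp
      then obtain t where t: "(t, snd y - 1) \<in> B" "concurrent a (fst y) t" using restB by blast
      then have "Rel a B (t, snd y - 1) y" using yB False by (auto simp: Rel_def conc_sym)
      then show ?thesis using t Inr by (intro bexI[of _ "Inr (t, snd y - 1)"]) (auto simp: R_def X_def)
    qed
  qed
  have "\<exists>!x. x \<in> P \<and> snd x = 0"
  proof (rule ex1I[of _ "(c, 0)"])
    show "(c, 0) \<in> P \<and> snd (c, 0) = 0" using cP by simp
    fix x assume x: "x \<in> P \<and> snd x = 0"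
    then obtain w where w: "w \<in> X" "x = e w" using P_eq by auto
    then have "depth X R w = 0" using x by (simp add: e_def)
    then have "\<not> (\<exists>w'\<in>X. R w' w)" using depth_zero_iff[OF finX acX w(1)] by simp
    then show "x = (c, 0)" using haspred w by blast
  qed
  then have pyrP: "pyramid a P" using hP by (simp add: pyramid_def)
  show "pyramid a (prodh a A B)" using pyrP P_def by simp
  show "(c, 0) \<in> prodh a A B" using cP P_def by simp
  have "card P = card X" using P_eq inj_e by (simp add: card_image)
  then show "card (prodh a A B) = card A + card B" using finA finB by (simp add: P_def X_def card_Plus)
  define QP where "QP = upQ a c P"
  have QP_eq: "QP = e ` Inr ` B"
  proof
    show "QP \<subseteq> e ` Inr ` B"
    proof
      fix y assume "y \<in> QP"
      then obtain x where x: "x \<in> P" "fst x < c" "(Rel a P)\<^sup>*\<^sup>* x y" by (auto simp: QP_def upQ_def)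
      from x(3) show "y \<in> e ` Inr ` B"
      proof induction
        case base
        obtain w where w: "w \<in> X" "x = e w" using x(1) P_eq by auto
        show ?case
        proof (cases w)
          case (Inl x')
          then have "x' \<in> A" "x = x'" using w eInl by (auto simp: X_def)
          then show ?thesis using Ar[of "fst x'" "snd x'"] x(2) by simp
        next
          case (Inr y')
          then show ?thesis using w by (auto simp: X_def)
        qed
      next
        case (step z z')
        then obtain y1 where y1: "y1 \<in> B" "z = e (Inr y1)" by auto
        have "z' \<in> P" using step(2) by (simp add: Rel_def)
        then obtain w where w: "w \<in> X" "z' = e w" using P_eq by auto
        have "Inr y1 \<in> X" unfolding X_def by (rule InrI) (rule y1(1))
        then have "R (Inr y1) w" using relP w step(2) y1 by auto
        then obtain y2 where "w = Inr y2" by (cases w) (auto simp: R_def)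
        then show ?case using w by (auto simp: X_def)
      qed
    qed
    show "e ` Inr ` B \<subseteq> QP"
    proof
      fix z assume "z \<in> e ` Inr ` B"
      then obtain y1 where y1: "y1 \<in> B" "z = e (Inr y1)" by auto
      have r: "(Rel a B)\<^sup>*\<^sup>* (b, 0) y1" by (rule pyr_reach'[OF pB bB y1(1)])
      have "(Rel a P)\<^sup>*\<^sup>* (e (Inr (b, 0))) (e (Inr y1))"
      proof (rule rtranclp_map[OF _ r])
        fix u v assume "Rel a B u v"
        then have "u \<in> B" "v \<in> B" "R (Inr u) (Inr v)" by (auto simp: R_def Rel_def)
        then show "Rel a P (e (Inr u)) (e (Inr v))" using relP by (auto simp: X_def)
      qed
      moreover have "Inr (b, 0) \<in> X" unfolding X_def by (rule InrI) (rule bB)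
      then have "e (Inr (b, 0)) \<in> P" using P_eq by blast
      moreover have "fst (e (Inr (b, 0))) < c" using bu by (simp add: e_def)
      moreover have "Inr y1 \<in> X" unfolding X_def by (rule InrI) (rule y1(1))
      then have "z \<in> P" using y1(2) P_eq by blast
      ultimately show "z \<in> QP" unfolding QP_def upQ_def using y1 by blast
    qed
  qed
  then show "upQ a c (prodh a A B) \<noteq> {}" using bB by (auto simp: QP_def P_def)
  have XU: "X = Inl ` A \<union> Inr ` B" by (auto simp: X_def)
  have eA: "e ` Inl ` A = A" using eInl by (force simp: image_iff)
  have disj: "e ` Inl ` A \<inter> e ` Inr ` B = {}"
  proof -
    have "e ` Inl ` A \<inter> e ` Inr ` B = e ` (Inl ` A \<inter> Inr ` B)"
      using inj_e XU by (intro inj_on_image_Int[symmetric]) auto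
    then show ?thesis by auto
  qed
  have "P = e ` Inl ` A \<union> e ` Inr ` B" using P_eq XU by auto
  then have "P - QP = A" using QP_eq disj eA by auto
  then show "prodh a A B - upQ a c (prodh a A B) = A" by (simp add: QP_def P_def)
  define gg where "gg = (\<lambda>y. e (Inr y))"
  have QPsub: "QP \<subseteq> P" using QP_eq P_eq by (auto simp: X_def)
  have bij_gg: "bij_betw gg B QP"
    unfolding bij_betw_def
  proof
    show "inj_on gg B" using inj_e unfolding gg_def inj_on_def X_def by auto
    show "gg ` B = QP" using QP_eq by (auto simp: gg_def)
  qed
  have relQ: "Rel a QP (gg u) (gg v) \<longleftrightarrow> Rel a B u v" if "u \<in> B" "v \<in> B" for u v
  proof -
    have "gg u \<in> QP" "gg v \<in> QP" using bij_gg that by (auto simp: bij_betw_def)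
    then have "Rel a QP (gg u) (gg v) \<longleftrightarrow> Rel a P (gg u) (gg v)" using Rel_restrict[OF QPsub] by blast
    also have "\<dots> \<longleftrightarrow> R (Inr u) (Inr v)" unfolding gg_def using relP that by (auto simp: X_def)
    also have "\<dots> \<longleftrightarrow> Rel a B u v" by (simp add: R_def)
    finally show ?thesis .
  qed
  have dQ: "depth QP (Rel a QP) (gg u) = snd u" if "u \<in> B" for u
    using depth_transport[where R'="Rel a QP" and R="Rel a B", OF bij_gg relQ that] heap_depth[OF hB that] by simp
  have "hp QP fst (Rel a QP) = (\<lambda>q. (fst q, depth QP (Rel a QP) q)) ` (gg ` B)"
    using bij_gg by (simp add: hp_def bij_betw_def)
  also have "\<dots> = (\<lambda>u. (fst u, snd u)) ` B"
    unfolding image_image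
  proof (rule image_cong[OF refl])
    fix u assume "u \<in> B"
    then show "(fst (gg u), depth QP (Rel a QP) (gg u)) = (fst u, snd u)" using dQ by (simp add: gg_def e_def)
  qed
  also have "\<dots> = B" by simp
  finally show "hp (upQ a c (prodh a A B)) fst (Rel a (upQ a c (prodh a A B))) = B"
    by (simp add: QP_def P_def)
qed


definition mir :: "int \<Rightarrow> piece \<Rightarrow> piece" where "mir a x = (- fst x - a, snd x)"

lemma mir_mir [simp]: "mir a (mir a x) = x" by (simp add: mir_def)
lemma mir_img_img [simp]: "mir a ` mir a ` H = H" by (simp add: image_image)
lemma inj_mir: "inj (mir a)" by (metis injI mir_mir)
lemma card_mir [simp]: "card (mir a ` H) = card H" by (rule card_image[OF inj_on_subset[OF inj_mir subset_UNIV]])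
lemma mir_mem_gen: "x \<in> mir a ` H \<longleftrightarrow> mir a x \<in> H"
proof
  assume "x \<in> mir a ` H" then obtain y where "y \<in> H" "x = mir a y" by blast
  then show "mir a x \<in> H" by simp
next
  assume "mir a x \<in> H" then have "mir a (mir a x) \<in> mir a ` H" by (rule imageI)
  then show "x \<in> mir a ` H" by simp
qed

lemma mir_mem: "(s, h) \<in> mir a ` H \<longleftrightarrow> (- s - a, h) \<in> H"
proof -
  have "mir a (s, h) = (- s - a, h)" by (simp add: mir_def)
  then show ?thesis by (simp only: mir_mem_gen)
qed

lemma conc_neg: "concurrent a (- s - a) (- t - a) \<longleftrightarrow> concurrent a s t"
  by (simp add: concurrent_def abs_minus_commute)

lemma heap_mir:
  assumes "is_heap a H" shows "is_heap a (mir a ` H)"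
proof -
  have all: "finite H \<and> (\<forall>s h t k. (s, h) \<in> H \<and> (t, k) \<in> H \<and> (s, h) \<noteq> (t, k) \<and> concurrent a s t \<longrightarrow> h \<noteq> k) \<and>
    (\<forall>s h. (s, h) \<in> H \<and> 0 < h \<longrightarrow> (\<exists>t. (t, h - 1) \<in> H \<and> concurrent a s t))"
    using assms unfolding is_heap_def .
  note fin = conjunct1[OF all] and d = conjunct1[OF conjunct2[OF all]] and r = conjunct2[OF conjunct2[OF all]]
  have 1: "finite (mir a ` H)" using fin by simp
  have 2: "\<forall>s h t k. (s, h) \<in> mir a ` H \<and> (t, k) \<in> mir a ` H \<and> (s, h) \<noteq> (t, k) \<and> concurrent a s t \<longrightarrow> h \<noteq> k"
  proof (intro allI impI)
    fix s h t k
    assume "(s, h) \<in> mir a ` H \<and> (t, k) \<in> mir a ` H \<and> (s, h) \<noteq> (t, k) \<and> concurrent a s t"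
    then have "(- s - a, h) \<in> H \<and> (- t - a, k) \<in> H \<and> (- s - a, h) \<noteq> (- t - a, k) \<and> concurrent a (- s - a) (- t - a)"
      by (simp add: mir_mem conc_neg)
    then show "h \<noteq> k" using d[rule_format, of "- s - a" h "- t - a" k] by simp
  qed
  have 3: "\<forall>s h. (s, h) \<in> mir a ` H \<and> 0 < h \<longrightarrow> (\<exists>t. (t, h - 1) \<in> mir a ` H \<and> concurrent a s t)"
  proof (intro allI impI)
    fix s h assume "(s, h) \<in> mir a ` H \<and> 0 < h"
    then have "(- s - a, h) \<in> H \<and> 0 < h" by (simp add: mir_mem)
    then obtain t where t: "(t, h - 1) \<in> H" "concurrent a (- s - a) t" using r by blast
    have "(- t - a, h - 1) \<in> mir a ` H" using t(1) by (simp add: mir_mem)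
    moreover have "concurrent a s (- t - a)" using t(2) conc_neg[of a s "- t - a"] by simp
    ultimately show "\<exists>t. (t, h - 1) \<in> mir a ` H \<and> concurrent a s t" by blast
  qed
  show ?thesis unfolding is_heap_def using 1 2 3 by blast
qed

lemma pyr_mir: "pyramid a H \<Longrightarrow> pyramid a (mir a ` H)"
  unfolding pyramid_def
proof -
  assume "is_heap a H \<and> (\<exists>!x. x \<in> H \<and> snd x = 0)"
  then have hh: "is_heap a H" and "\<exists>!x. x \<in> H \<and> snd x = 0" by auto
  then obtain x where x: "x \<in> H" "snd x = 0" "\<And>y. y \<in> H \<Longrightarrow> snd y = 0 \<Longrightarrow> y = x"
    by (elim ex1E) (blast intro: that)
  have "\<exists>!x. x \<in> mir a ` H \<and> snd x = 0"
  proof (rule ex1I[of _ "mir a x"])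
    have "snd (mir a x) = 0" using x(2) by (simp add: mir_def)
    then show "mir a x \<in> mir a ` H \<and> snd (mir a x) = 0" using imageI[OF x(1)] by blast
    fix y assume y: "y \<in> mir a ` H \<and> snd y = 0"
    then have "mir a y \<in> H" using mir_mem_gen by blast
    moreover have "snd (mir a y) = 0" using y by (simp add: mir_def)
    ultimately have "mir a y = x" using x(3) by blast
    then have "mir a (mir a y) = mir a x" by simp
    then show "y = mir a x" by simp
  qed
  then show "is_heap a (mir a ` H) \<and> (\<exists>!x. x \<in> mir a ` H \<and> snd x = 0)" using heap_mir[OF hh] by blast
qed

lemma right_mir:
  assumes "right_pyramid a p s" shows "left_pyramid a (mir a ` p) (- s)"
proof -
  have "pyramid a p" "(s, 0) \<in> p" "\<And>t h. (t, h) \<in> p \<Longrightarrow> s \<le> t"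
    using assms by (auto simp: right_pyramid_def)
  moreover have "(- s - a, 0) \<in> mir a ` p" using \<open>(s, 0) \<in> p\<close> by (simp add: mir_mem)
  moreover have "t \<le> - s - a" if "(t, h) \<in> mir a ` p" for t h
  proof -
    have "(- t - a, h) \<in> p" using that by (simp add: mir_mem)
    then have "s \<le> - t - a" using calculation(3) by blast
    then show ?thesis by simp
  qed
  ultimately show ?thesis unfolding left_pyramid_def using pyr_mir[OF \<open>pyramid a p\<close>] by blast
qed

lemma left_mir:
  assumes "left_pyramid a p s" shows "right_pyramid a (mir a ` p) (- s)"
proof -
  have "pyramid a p" "(s - a, 0) \<in> p" "\<And>t h. (t, h) \<in> p \<Longrightarrow> t \<le> s - a"
    using assms by (auto simp: left_pyramid_def)
  moreover have "(- s, 0) \<in> mir a ` p" using \<open>(s - a, 0) \<in> p\<close> by (simp add: mir_mem)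
  moreover have "- s \<le> t" if "(t, h) \<in> mir a ` p" for t h
  proof -
    have "(- t - a, h) \<in> p" using that by (simp add: mir_mem)
    then have "- t - a \<le> s - a" using calculation(3) by blast
    then show ?thesis by simp
  qed
  ultimately show ?thesis unfolding right_pyramid_def using pyr_mir[OF \<open>pyramid a p\<close>] by blast
qed


definition Pyr :: "int \<Rightarrow> int \<Rightarrow> nat \<Rightarrow> heap set" where
  "Pyr a c n = {P. pyramid a P \<and> (c, 0) \<in> P \<and> card P = n}"

definition RP :: "int \<Rightarrow> int \<Rightarrow> nat \<Rightarrow> heap set" where
  "RP a c n = {P. right_pyramid a P c \<and> card P = n}"

definition botp :: "heap \<Rightarrow> int" where "botp B = (THE b. (b, 0) \<in> B)"

lemma bot_eq: "pyramid a B \<Longrightarrow> (b, 0) \<in> B \<Longrightarrow> botp B = b"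
  unfolding botp_def
proof (rule the_equality)
  assume "pyramid a B" "(b, 0) \<in> B"
  then show "(b, 0) \<in> B" by simp
  fix b' assume "(b', 0) \<in> B"
  then have "(b', 0) = (b, 0)" using pyr_bot_unique[of a B b "(b', 0)"] \<open>pyramid a B\<close> \<open>(b, 0) \<in> B\<close> by simp
  then show "b' = b" by simp
qed

definition decomp :: "int \<Rightarrow> int \<Rightarrow> heap \<Rightarrow> heap + ((nat \<times> int) \<times> (heap \<times> heap))" where
  "decomp a c P = (if upQ a c P = {} then Inl P else
     Inr ((card (P - upQ a c P), botp (hp (upQ a c P) fst (Rel a (upQ a c P)))),
          (P - upQ a c P, hp (upQ a c P) fst (Rel a (upQ a c P)))))"

definition recomp :: "int \<Rightarrow> heap + ((nat \<times> int) \<times> (heap \<times> heap)) \<Rightarrow> heap" where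
  "recomp a = case_sum id (\<lambda>(kb, (A, B)). prodh a A B)"

lemma decomp_facts:
  assumes a: "a > 0" and P: "pyramid a P" "(c, 0) \<in> P" "card P = n" and ne: "upQ a c P \<noteq> {}"
  shows "P - upQ a c P \<in> RP a c (card (P - upQ a c P))" "1 \<le> card (P - upQ a c P)"
    "card (P - upQ a c P) < n"
    "c - a < botp (hp (upQ a c P) fst (Rel a (upQ a c P)))" "botp (hp (upQ a c P) fst (Rel a (upQ a c P))) < c"
    "hp (upQ a c P) fst (Rel a (upQ a c P)) \<in> Pyr a (botp (hp (upQ a c P) fst (Rel a (upQ a c P)))) (n - card (P - upQ a c P))"
proof -
  define Q where "Q = upQ a c P"
  define B where "B = hp Q fst (Rel a Q)"
  have rA: "right_pyramid a (P - Q) c" using A_right[OF a P(1,2)] Q_def by simp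
  then show "P - upQ a c P \<in> RP a c (card (P - upQ a c P))" by (simp add: RP_def Q_def)
  have "pyramid a (P - Q)" using rA by (simp add: right_pyramid_def)
  then have k1: "1 \<le> card (P - Q)" by (rule pyr_card)
  then show "1 \<le> card (P - upQ a c P)" by (simp add: Q_def)
  obtain b where b: "c - a < b" "b < c" "(b, 0) \<in> B" "pyramid a B"
    using B_pyr[OF a P(1,2)] ne unfolding B_def Q_def by blast
  have botB: "botp B = b" using bot_eq b by blast
  then show "c - a < botp (hp (upQ a c P) fst (Rel a (upQ a c P)))" "botp (hp (upQ a c P) fst (Rel a (upQ a c P))) < c"
    using b by (simp_all add: B_def Q_def)
  have finP: "finite P" using P(1) by (simp add: pyramid_def is_heap_def)
  have QP: "Q \<subseteq> P" using Q_sub[OF a P(1,2)] Q_def by simp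
  have finQ: "finite Q" using finP QP finite_subset by blast
  have "card Q \<ge> 1" using ne finQ Q_def by (simp add: Suc_le_eq card_gt_0_iff)
  have cP: "card P = card (P - Q) + card Q" using card_Diff_subset[OF finQ QP] card_mono[OF finP QP] by simp
  then show "card (P - upQ a c P) < n" using \<open>card Q \<ge> 1\<close> P(3) by (simp add: Q_def)
  have "card B = card Q" using card_B[OF a P(1,2)] by (simp add: B_def Q_def)
  then have "B \<in> Pyr a (botp B) (n - card (P - Q))" using b botB cP P(3) by (simp add: Pyr_def)
  then show "hp (upQ a c P) fst (Rel a (upQ a c P)) \<in> Pyr a (botp (hp (upQ a c P) fst (Rel a (upQ a c P)))) (n - card (P - upQ a c P))"
    by (simp add: B_def Q_def)
qed

lemma right_Q_empty:
  assumes a: "a > 0" and r: "right_pyramid a A c"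
  shows "upQ a c A = {}"
proof -
  have "pyramid a A" "(c, 0) \<in> A" "\<forall>x\<in>A. c \<le> fst x" using r by (auto simp: right_pyramid_def)
  then show ?thesis using Q_empty_iff[OF a] by blast
qed

lemma Pyr_decomp:
  assumes a: "a > 0"
  shows "Pyr a c n \<approx> RP a c n <+> Sigma ({1..<n} \<times> {c - a<..<c}) (\<lambda>kb. RP a c (fst kb) \<times> Pyr a (snd kb) (n - fst kb))"
  (is "_ \<approx> ?D")
  unfolding eqpoll_def
proof (rule exI, rule bij_betw_byWitness[where f = "decomp a c" and f' = "recomp a"])
  show "\<forall>P\<in>Pyr a c n. recomp a (decomp a c P) = P"
  proof
    fix P assume "P \<in> Pyr a c n"
    then have P: "pyramid a P" "(c, 0) \<in> P" by (auto simp: Pyr_def)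
    show "recomp a (decomp a c P) = P"
      by (simp add: recomp_def decomp_def prod_decomp[OF a P])
  qed
  show "decomp a c ` Pyr a c n \<subseteq> ?D"
  proof
    fix y assume "y \<in> decomp a c ` Pyr a c n"
    then obtain P where Pm: "P \<in> Pyr a c n" and y: "y = decomp a c P" by blast
    then have P: "pyramid a P" "(c, 0) \<in> P" "card P = n" by (auto simp: Pyr_def)
    show "y \<in> ?D"
    proof (cases "upQ a c P = {}")
      case True
      then have "\<forall>x\<in>P. c \<le> fst x" using Q_empty_iff[OF a P(1,2)] by blast
      then have "right_pyramid a P c" using P by (auto simp: right_pyramid_def)
      then have PR: "P \<in> RP a c n" using P(3) by (simp add: RP_def)
      have "y = Inl P" using y True by (simp add: decomp_def)
      then show ?thesis using PR by (simp only: Plus_def) blast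
    next
      case False
      note f = decomp_facts[OF a P False]
      define A where "A = P - upQ a c P"
      define B where "B = hp (upQ a c P) fst (Rel a (upQ a c P))"
      have y': "y = Inr ((card A, botp B), (A, B))" using y False by (simp add: decomp_def A_def B_def)
      have "(card A, botp B) \<in> {1..<n} \<times> {c - a<..<c}" using f by (simp add: A_def B_def)
      moreover have "(A, B) \<in> RP a c (card A) \<times> Pyr a (botp B) (n - card A)" using f by (simp add: A_def B_def)
      ultimately have "((card A, botp B), (A, B)) \<in> Sigma ({1..<n} \<times> {c - a<..<c}) (\<lambda>kb. RP a c (fst kb) \<times> Pyr a (snd kb) (n - fst kb))"
        by simp
      then show ?thesis unfolding y' by (rule InrI)
    qed
  qed
  show "\<forall>d\<in>?D. decomp a c (recomp a d) = d"
  proof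
    fix d assume d: "d \<in> ?D"
    show "decomp a c (recomp a d) = d"
    proof (cases d)
      case (Inl A)
      then have "A \<in> RP a c n" using d by simp
      then have "right_pyramid a A c" by (simp add: RP_def)
      then show ?thesis using Inl right_Q_empty[OF a] by (simp add: recomp_def decomp_def)
    next
      case (Inr r)
      then obtain k b A B where r: "d = Inr ((k, b), (A, B))" by (metis prod.collapse)
      then have "((k, b), (A, B)) \<in> Sigma ({1..<n} \<times> {c - a<..<c}) (\<lambda>kb. RP a c (fst kb) \<times> Pyr a (snd kb) (n - fst kb))"
        using d(1) by simp
      then have m: "1 \<le> k" "k < n" "c - a < b" "b < c" "right_pyramid a A c" "card A = k"
        "pyramid a B" "(b, 0) \<in> B" "card B = n - k"
        by (simp_all add: RP_def Pyr_def)
      note pp = prod_props[OF a m(5) m(7) m(8) m(3) m(4)]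
      have "botp B = b" using bot_eq m(7,8) by blast
      then show ?thesis using r pp m by (simp add: recomp_def decomp_def)
    qed
  qed
  show "recomp a ` ?D \<subseteq> Pyr a c n"
  proof
    fix P assume "P \<in> recomp a ` ?D"
    then obtain d where d: "d \<in> ?D" "P = recomp a d" by blast
    show "P \<in> Pyr a c n"
    proof (cases d)
      case (Inl A)
      then have "A \<in> RP a c n" "P = A" using d by (auto simp: recomp_def)
      then show ?thesis by (simp add: RP_def Pyr_def right_pyramid_def)
    next
      case (Inr r)
      then obtain k b A B where r: "d = Inr ((k, b), (A, B))" by (metis prod.collapse)
      then have "((k, b), (A, B)) \<in> Sigma ({1..<n} \<times> {c - a<..<c}) (\<lambda>kb. RP a c (fst kb) \<times> Pyr a (snd kb) (n - fst kb))"
        using d(1) by simp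
      then have m: "1 \<le> k" "k < n" "c - a < b" "b < c" "right_pyramid a A c" "card A = k"
        "pyramid a B" "(b, 0) \<in> B" "card B = n - k"
        by (simp_all add: RP_def Pyr_def)
      note pp = prod_props[OF a m(5) m(7) m(8) m(3) m(4)]
      then show ?thesis using r d(2) m by (simp add: recomp_def Pyr_def)
    qed
  qed
qed


definition pc :: "int \<Rightarrow> bool \<Rightarrow> heap \<Rightarrow> int \<Rightarrow> bool" where
  "pc a d p s = (if d then right_pyramid a p s else left_pyramid a p s)"

definition dc :: "int \<Rightarrow> bool \<Rightarrow> int \<Rightarrow> int \<Rightarrow> bool" where
  "dc a d s s' = (if d then 1 \<le> s' - s \<and> s' - s \<le> a - 1 else 1 \<le> s - s' \<and> s - s' \<le> a - 1)"

definition Seq :: "int \<Rightarrow> bool \<Rightarrow> int \<Rightarrow> nat \<Rightarrow> (heap \<times> int) list set" where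
  "Seq a d c n = {xs. length xs \<ge> 1 \<and>
     (\<forall>i < length xs. pc a (even i = d) (fst (xs ! i)) (snd (xs ! i))) \<and>
     (\<Sum>x\<leftarrow>xs. card (fst x)) = n \<and>
     snd (xs ! 0) = c \<and>
     (\<forall>i. i + 1 < length xs \<longrightarrow> dc a (even i = d) (snd (xs ! i)) (snd (xs ! (i+1))))}"

lemma pyr_sequences_Seq: "pyr_sequences a m = Seq a True 0 m"
  unfolding pyr_sequences_def Seq_def pc_def dc_def by simp

lemma pyramids_at0_Pyr: "pyramids_at0 a m = Pyr a 0 m"
  unfolding pyramids_at0_def Pyr_def by simp

lemma even_Suc_eq: "(even (Suc i) = d) = (even i = (\<not> d))" by auto

lemma odd_eq: "(odd j = d) = (even j = (\<not> d))" by auto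

lemma all_Suc_split: "(\<forall>i::nat. P i) \<longleftrightarrow> P 0 \<and> (\<forall>j. P (Suc j))"
  by (metis not0_implies_Suc)

lemma pc_card: "pc a d p s \<Longrightarrow> card p \<ge> 1"
  unfolding pc_def right_pyramid_def left_pyramid_def using pyr_card by (auto split: if_splits)

lemma Seq_sum_pos: "ys \<in> Seq a d c m \<Longrightarrow> m \<ge> 1"
proof -
  assume "ys \<in> Seq a d c m"
  then have l0: "length ys \<ge> 1" "\<forall>i < length ys. pc a (even i = d) (fst (ys ! i)) (snd (ys ! i))"
     "(\<Sum>x\<leftarrow>ys. card (fst x)) = m"
    unfolding Seq_def by auto
  then have "pc a (even (0::nat) = d) (fst (ys ! 0)) (snd (ys ! 0))" by (meson less_le_trans zero_less_one)
  then have l: "length ys \<ge> 1" "pc a d (fst (ys ! 0)) (snd (ys ! 0))" "(\<Sum>x\<leftarrow>ys. card (fst x)) = m"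
    using l0 by auto
  then obtain y zs where "ys = y # zs" by (cases ys) auto
  then show "m \<ge> 1" using l pc_card[OF l(2)] by auto
qed

lemma Seq_Cons:
  "(x # ys) \<in> Seq a d c n \<longleftrightarrow> snd x = c \<and> pc a d (fst x) (snd x) \<and>
     (if ys = [] then card (fst x) = n
      else dc a d (snd x) (snd (hd ys)) \<and> card (fst x) < n \<and> ys \<in> Seq a (\<not> d) (snd (hd ys)) (n - card (fst x)))"
proof (cases ys)
  case Nil
  then show ?thesis unfolding Seq_def by auto
next
  case (Cons y zs)
  have e1: "(\<forall>i < length (x # ys). pc a (even i = d) (fst ((x # ys) ! i)) (snd ((x # ys) ! i))) \<longleftrightarrow>
      pc a d (fst x) (snd x) \<and> (\<forall>i < length ys. pc a (even i = (\<not> d)) (fst (ys ! i)) (snd (ys ! i)))"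
    by (simp only: length_Cons All_less_Suc2 nth_Cons_0 nth_Cons_Suc even_Suc_eq) simp
  have e2: "(\<forall>i. i + 1 < length (x # ys) \<longrightarrow> dc a (even i = d) (snd ((x # ys) ! i)) (snd ((x # ys) ! (i+1)))) \<longleftrightarrow>
      dc a d (snd x) (snd (hd ys)) \<and> (\<forall>i. i + 1 < length ys \<longrightarrow> dc a (even i = (\<not> d)) (snd (ys ! i)) (snd (ys ! (i+1))))"
    apply (subst all_Suc_split)
    using Cons by (simp add: even_Suc_eq odd_eq)
  have s: "(\<Sum>x\<leftarrow>x # ys. card (fst x)) = card (fst x) + (\<Sum>x\<leftarrow>ys. card (fst x))" by simp
  show ?thesis
  proof
    assume L: "x # ys \<in> Seq a d c n"
    then have "ys \<in> Seq a (\<not> d) (snd (hd ys)) (\<Sum>x\<leftarrow>ys. card (fst x))"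
      using e1 e2 Cons unfolding Seq_def by auto
    moreover then have "(\<Sum>x\<leftarrow>ys. card (fst x)) \<ge> 1" by (rule Seq_sum_pos)
    ultimately show "snd x = c \<and> pc a d (fst x) (snd x) \<and>
     (if ys = [] then card (fst x) = n
      else dc a d (snd x) (snd (hd ys)) \<and> card (fst x) < n \<and> ys \<in> Seq a (\<not> d) (snd (hd ys)) (n - card (fst x)))"
      using L e1 e2 Cons s unfolding Seq_def by auto
  next
    assume R: "snd x = c \<and> pc a d (fst x) (snd x) \<and>
     (if ys = [] then card (fst x) = n
      else dc a d (snd x) (snd (hd ys)) \<and> card (fst x) < n \<and> ys \<in> Seq a (\<not> d) (snd (hd ys)) (n - card (fst x)))"
    then show "x # ys \<in> Seq a d c n"
      using e1 e2 Cons s unfolding Seq_def by auto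
  qed
qed


lemma Seq_hd: "ys \<in> Seq a d c m \<Longrightarrow> ys \<noteq> [] \<and> snd (hd ys) = c"
  unfolding Seq_def by (cases ys) auto

definition sdec :: "(heap \<times> int) list \<Rightarrow> heap + ((nat \<times> int) \<times> (heap \<times> (heap \<times> int) list))" where
  "sdec xs = (if tl xs = [] then Inl (fst (hd xs))
     else Inr ((card (fst (hd xs)), snd (hd (tl xs))), (fst (hd xs), tl xs)))"

definition srec :: "int \<Rightarrow> heap + ((nat \<times> int) \<times> (heap \<times> (heap \<times> int) list)) \<Rightarrow> (heap \<times> int) list" where
  "srec c = case_sum (\<lambda>p. [(p, c)]) (\<lambda>(ks, (p, ys)). (p, c) # ys)"

lemma Seq_decomp:
  "Seq a True c n \<approx> RP a c n <+> Sigma ({1..<n} \<times> {c + 1..c + a - 1}) (\<lambda>ks. RP a c (fst ks) \<times> Seq a False (snd ks) (n - fst ks))"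
  (is "_ \<approx> ?D")
  unfolding eqpoll_def
proof (rule exI, rule bij_betw_byWitness[where f = sdec and f' = "srec c"])
  show "\<forall>xs\<in>Seq a True c n. srec c (sdec xs) = xs"
  proof
    fix xs assume xs: "xs \<in> Seq a True c n"
    then obtain x ys where e: "xs = x # ys" using Seq_hd[OF xs] by (cases xs) auto
    then have "snd x = c" using xs Seq_Cons by blast
    then show "srec c (sdec xs) = xs" using e by (cases ys) (auto simp: sdec_def srec_def)
  qed
  show "sdec ` Seq a True c n \<subseteq> ?D"
  proof
    fix y assume "y \<in> sdec ` Seq a True c n"
    then obtain xs where xs: "xs \<in> Seq a True c n" "y = sdec xs" by blast
    then obtain x ys where e: "xs = x # ys" using Seq_hd[OF xs(1)] by (cases xs) auto
    have xs': "x # ys \<in> Seq a True c n" using xs(1) e by simp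
    then have "snd x = c" by (simp add: Seq_Cons)
    then obtain p where xp: "x = (p, c)" by (cases x) auto
    have L: "pc a True p c \<and> (if ys = [] then card p = n
      else dc a True c (snd (hd ys)) \<and> card p < n \<and> ys \<in> Seq a False (snd (hd ys)) (n - card p))"
      using xs' unfolding xp Seq_Cons by (simp only: fst_conv snd_conv not_True_eq_False) (auto split: if_splits)
    show "y \<in> ?D"
    proof (cases "ys = []")
      case True
      then have "p \<in> RP a c n" using L by (simp add: RP_def pc_def)
      then show ?thesis using xs(2) e True xp by (simp add: sdec_def)
    next
      case False
      then have "1 \<le> card p" using L pc_card by blast
      then show ?thesis using xs(2) e False L xp by (simp add: sdec_def RP_def pc_def dc_def)
    qed
  qed
  show "\<forall>d\<in>?D. sdec (srec c d) = d"
  proof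
    fix d assume d: "d \<in> ?D"
    show "sdec (srec c d) = d"
    proof (cases d)
      case (Inl p) then show ?thesis by (simp add: sdec_def srec_def)
    next
      case (Inr r)
      then obtain k s p ys where r: "d = Inr ((k, s), (p, ys))" by (metis prod.collapse)
      then have m: "card p = k" "ys \<in> Seq a False s (n - k)" using d by (auto simp: RP_def)
      then have "ys \<noteq> []" "snd (hd ys) = s" using Seq_hd by blast+
      then show ?thesis using r m by (simp add: sdec_def srec_def)
    qed
  qed
  show "srec c ` ?D \<subseteq> Seq a True c n"
  proof
    fix xs assume "xs \<in> srec c ` ?D"
    then obtain d where d: "d \<in> ?D" "xs = srec c d" by blast
    show "xs \<in> Seq a True c n"
    proof (cases d)
      case (Inl p)
      then have "p \<in> RP a c n" using d by simp
      then show ?thesis using d Inl Seq_Cons[of "(p, c)" "[]" a True c n] by (simp add: srec_def RP_def pc_def)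
    next
      case (Inr r)
      then obtain k s p ys where r: "d = Inr ((k, s), (p, ys))" by (metis prod.collapse)
      then have m: "1 \<le> k" "k < n" "c + 1 \<le> s" "s \<le> c + a - 1" "right_pyramid a p c" "card p = k"
        "ys \<in> Seq a False s (n - k)" using d by (auto simp: RP_def)
      then have "ys \<noteq> []" "snd (hd ys) = s" using Seq_hd by blast+
      then show ?thesis using d(2) r m Seq_Cons[of "(p, c)" ys a True c n] by (simp add: srec_def pc_def dc_def)
    qed
  qed
qed


lemma pc_mir: "pc a e p s \<Longrightarrow> pc a (\<not> e) (mir a ` p) (- s)"
  unfolding pc_def using right_mir[of a p s] left_mir[of a p s] by (cases e) simp_all

lemma dc_mir: "dc a e s s' \<Longrightarrow> dc a (\<not> e) (- s) (- s')"
  unfolding dc_def by (auto split: if_splits)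

definition mm :: "int \<Rightarrow> (heap \<times> int) list \<Rightarrow> (heap \<times> int) list" where
  "mm a = map (\<lambda>x. (mir a ` fst x, - snd x))"

lemma mm_mm [simp]: "mm a (mm a xs) = xs"
  by (induction xs) (auto simp: mm_def image_image)

lemma Seq_mm:
  assumes "xs \<in> Seq a d c n" shows "mm a xs \<in> Seq a (\<not> d) (- c) n"
proof -
  have l: "length xs \<ge> 1" "\<forall>i < length xs. pc a (even i = d) (fst (xs ! i)) (snd (xs ! i))"
    "(\<Sum>x\<leftarrow>xs. card (fst x)) = n" "snd (xs ! 0) = c"
    "\<forall>i. i + 1 < length xs \<longrightarrow> dc a (even i = d) (snd (xs ! i)) (snd (xs ! (i+1)))"
    using assms unfolding Seq_def by blast+
  have e: "\<And>i. (even i = (\<not> d)) = (\<not> (even i = d))" by auto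
  have "\<forall>i < length (mm a xs). pc a (even i = (\<not> d)) (fst (mm a xs ! i)) (snd (mm a xs ! i))"
  proof (intro allI impI)
    fix i assume i: "i < length (mm a xs)"
    then have "i < length xs" by (simp add: mm_def)
    then have "pc a (\<not> (even i = d)) (mir a ` fst (xs ! i)) (- snd (xs ! i))" using l(2) pc_mir by blast
    then show "pc a (even i = (\<not> d)) (fst (mm a xs ! i)) (snd (mm a xs ! i))"
      using \<open>i < length xs\<close> by (simp only: mm_def nth_map e fst_conv snd_conv)
  qed
  moreover have "\<forall>i. i + 1 < length (mm a xs) \<longrightarrow> dc a (even i = (\<not> d)) (snd (mm a xs ! i)) (snd (mm a xs ! (i+1)))"
  proof (intro allI impI)
    fix i assume i: "i + 1 < length (mm a xs)"
    then have i': "i + 1 < length xs" "i < length xs" by (simp_all add: mm_def)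
    then have "dc a (\<not> (even i = d)) (- snd (xs ! i)) (- snd (xs ! (i + 1)))" using l(5) dc_mir by blast
    then show "dc a (even i = (\<not> d)) (snd (mm a xs ! i)) (snd (mm a xs ! (i+1)))"
      using i' by (simp only: mm_def nth_map e fst_conv snd_conv)
  qed
  moreover have "(\<Sum>x\<leftarrow>mm a xs. card (fst x)) = n"
    using l(3) by (simp add: mm_def o_def)
  moreover have "snd (mm a xs ! 0) = - c"
  proof -
    have "0 < length xs" using l(1) by linarith
    then have "mm a xs ! 0 = (mir a ` fst (xs ! 0), - snd (xs ! 0))" by (simp add: mm_def nth_map)
    then show ?thesis using l(4) by simp
  qed
  moreover have "length (mm a xs) \<ge> 1" using l(1) by (simp add: mm_def)
  ultimately show ?thesis unfolding Seq_def by blast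
qed

lemma Seq_mirror: "Seq a d c n \<approx> Seq a (\<not> d) (- c) n"
  unfolding eqpoll_def
proof (rule exI, rule bij_betw_byWitness[where f = "mm a" and f' = "mm a"])
  show "\<forall>x\<in>Seq a d c n. mm a (mm a x) = x" by simp
  show "\<forall>x\<in>Seq a (\<not> d) (- c) n. mm a (mm a x) = x" by simp
  show "mm a ` Seq a d c n \<subseteq> Seq a (\<not> d) (- c) n" using Seq_mm by blast
  show "mm a ` Seq a (\<not> d) (- c) n \<subseteq> Seq a d c n" using Seq_mm[of _ a "\<not> d" "- c" n] by auto
qed

lemma Pyr_mirror: "Pyr a c n \<approx> Pyr a (- c - a) n"
  unfolding eqpoll_def
proof (rule exI, rule bij_betw_byWitness[where f = "image (mir a)" and f' = "image (mir a)"])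
  show "\<forall>x\<in>Pyr a c n. mir a ` mir a ` x = x" by simp
  show "\<forall>x\<in>Pyr a (- c - a) n. mir a ` mir a ` x = x" by simp
  show "image (mir a) ` Pyr a c n \<subseteq> Pyr a (- c - a) n"
  proof
    fix Q assume "Q \<in> image (mir a) ` Pyr a c n"
    then obtain P where P: "P \<in> Pyr a c n" "Q = mir a ` P" by blast
    then have "pyramid a P" "(c, 0) \<in> P" "card P = n" by (simp_all add: Pyr_def)
    moreover have "(- c - a, 0) \<in> mir a ` P" using \<open>(c, 0) \<in> P\<close> by (simp add: mir_mem)
    ultimately show "Q \<in> Pyr a (- c - a) n" using P(2) pyr_mir by (simp add: Pyr_def)
  qed
  show "image (mir a) ` Pyr a (- c - a) n \<subseteq> Pyr a c n"
  proof
    fix Q assume "Q \<in> image (mir a) ` Pyr a (- c - a) n"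
    then obtain P where P: "P \<in> Pyr a (- c - a) n" "Q = mir a ` P" by blast
    then have "pyramid a P" "(- c - a, 0) \<in> P" "card P = n" by (simp_all add: Pyr_def)
    moreover have "(c, 0) \<in> mir a ` P" using \<open>(- c - a, 0) \<in> P\<close> by (simp add: mir_mem)
    ultimately show "Q \<in> Pyr a c n" using P(2) pyr_mir by (simp add: Pyr_def)
  qed
qed

lemma main_eqpoll:
  assumes a: "a > 0"
  shows "\<forall>c. Pyr a c n \<approx> Seq a True c n"
proof (induction n rule: less_induct)
  case (less n)
  show ?case
  proof
    fix c
    define I where "I = {1..<n} \<times> {c - a<..<c}"
    define J where "J = {1..<n} \<times> {c + 1..c + a - 1}"
    define h :: "nat \<times> int \<Rightarrow> nat \<times> int" where "h = (\<lambda>(k, b). (k, b + a))"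
    have bh: "bij_betw h I J"
    proof (rule bij_betw_byWitness[where f' = "\<lambda>(k, s). (k, s - a)"])
      show "\<forall>x\<in>I. (\<lambda>(k, s). (k, s - a)) (h x) = x" by (auto simp: h_def)
      show "\<forall>x\<in>J. h ((\<lambda>(k, s). (k, s - a)) x) = x" by (auto simp: h_def)
      show "h ` I \<subseteq> J" by (auto simp: h_def I_def J_def)
      show "(\<lambda>(k, s). (k, s - a)) ` J \<subseteq> I" by (auto simp: I_def J_def)
    qed
    have pw: "RP a c (fst kb) \<times> Pyr a (snd kb) (n - fst kb) \<approx>
              RP a c (fst (h kb)) \<times> Seq a False (snd (h kb)) (n - fst (h kb))" if "kb \<in> I" for kb
    proof -
      obtain k b where kb: "kb = (k, b)" by (cases kb)
      then have k: "1 \<le> k" "k < n" using that by (auto simp: I_def)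
      have "Pyr a b (n - k) \<approx> Pyr a (- b - a) (n - k)" by (rule Pyr_mirror)
      also have "\<dots> \<approx> Seq a True (- b - a) (n - k)" using less k by simp
      also have "\<dots> \<approx> Seq a False (b + a) (n - k)" using Seq_mirror[of a True "- b - a" "n - k"] by (simp add: add.commute)
      finally have "Pyr a b (n - k) \<approx> Seq a False (b + a) (n - k)" .
      then show ?thesis using kb by (simp add: h_def times_eqpoll_cong)
    qed
    have "Pyr a c n \<approx> RP a c n <+> Sigma I (\<lambda>kb. RP a c (fst kb) \<times> Pyr a (snd kb) (n - fst kb))"
      using Pyr_decomp[OF a] by (simp add: I_def)
    also have "\<dots> \<approx> RP a c n <+> Sigma J (\<lambda>ks. RP a c (fst ks) \<times> Seq a False (snd ks) (n - fst ks))"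
      by (rule sum_eqpoll_cong[OF eqpoll_refl Sigma_eqpoll_cong[where B="\<lambda>kb. RP a c (fst kb) \<times> Pyr a (snd kb) (n - fst kb)"
        and D="\<lambda>ks. RP a c (fst ks) \<times> Seq a False (snd ks) (n - fst ks)", OF bh pw]])
    also have "\<dots> \<approx> Seq a True c n"
      using Seq_decomp[of a c n] by (simp add: J_def eqpoll_sym)
    finally show "Pyr a c n \<approx> Seq a True c n" .
  qed
qed

theorem lemma4:
  fixes a :: int and m :: nat
  assumes "a \<ge> 3" and "m \<ge> 1"
  shows "\<exists>f. bij_betw f (pyramids_at0 a m) (pyr_sequences a m)"
proof -
  have "a > 0" using assms(1) by simp
  then have "Pyr a 0 m \<approx> Seq a True 0 m" using main_eqpoll by blast
  then show ?thesis unfolding eqpoll_def pyramids_at0_Pyr pyr_sequences_Seq .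
qed

end
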